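(* For every integer $N\geq 0$ the following identities hold in $\mathcal{A}(S^5_q)$: $$\sum_{j+k+l=N}[j,k,l]!\,(z_1^jz_2^kz_3^l)(z_1^jz_2^kz_3^l)^*=1,\qquad \sum_{j+k+l=N}q^{2(j-l)}[j,k,l]!\,(z_1^jz_2^kz_3^l)^*(z_1^jz_2^kz_3^l)=q^{-2N},$$ where the sums run over all triples $(j,k,l)$ of non-negative integers with $j+k+l=N$.
   Context: Fix $0<q<1$. $\mathcal{A}(S^5_q)$ is the unital $*$-algebra generated by $z_1,z_2,z_3$ and their adjoints with relations: $z_iz_j=qz_jz_i$ for $i<j$; $z_i^*z_j=qz_jz_i^*$ for $i\neq j$; $[z_1^*,z_1]=0$; $[z_2^*,z_2]=(1-q^2)z_1z_1^*$; $[z_3^*,z_3]=(1-q^2)(z_1z_1^*+z_2z_2^* )$; $z_1z_1^*+z_2z_2^*+z_3z_3^*=1$. For $x\in\mathbb{C}$, $[x]:=\frac{q^x-q^{-x}}{q-q^{-1}}$; for $n\in\mathbb{N}$, $[n]!:=[n][n-1]\cdots[1]$, $[0]!:=1$. The $q$-trinomial coefficient is $[j,k,l]!:=q^{-(jk+kl+lj)}\frac{[j+k+l]!}{[j]![k]![l]!}$. *)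

theory Defs
  imports Complex_Main
begin

text \<open>A unital complex *-algebra, presented as a ring 'a together with a
  unital ring homomorphism iota from the complex numbers into the centre of 'a
  (this is exactly a unital associative C-algebra structure) and an involution
  star which is additive, anti-multiplicative, involutive and conjugate-linear.\<close>

definition complex_star_algebra :: "(complex \<Rightarrow> 'a::ring_1) \<Rightarrow> ('a \<Rightarrow> 'a) \<Rightarrow> bool" where
  "complex_star_algebra \<iota> st \<longleftrightarrow>
     (\<forall>a b. \<iota> (a + b) = \<iota> a + \<iota> b) \<and>
     (\<forall>a b. \<iota> (a * b) = \<iota> a * \<iota> b) \<and>
     \<iota> 1 = 1 \<and>
     (\<forall>a x. \<iota> a * x = x * \<iota> a) \<and>
     (\<forall>x y. st (x + y) = st x + st y) \<and>
     (\<forall>x y. st (x * y) = st y * st x) \<and>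
     (\<forall>x. st (st x) = x) \<and>
     (\<forall>a. st (\<iota> a) = \<iota> (cnj a))"

definition S5q_relations ::
  "real \<Rightarrow> (complex \<Rightarrow> 'a::ring_1) \<Rightarrow> ('a \<Rightarrow> 'a) \<Rightarrow> 'a \<Rightarrow> 'a \<Rightarrow> 'a \<Rightarrow> bool" where
  "S5q_relations q \<iota> st z1 z2 z3 \<longleftrightarrow>
     (let c = \<iota> (complex_of_real q); z = (\<lambda>i::nat. if i = 1 then z1 else if i = 2 then z2 else z3) in
       (\<forall>i\<in>{1,2,3}. \<forall>j\<in>{1,2,3}. i < j \<longrightarrow> z i * z j = c * (z j * z i)) \<and>
       (\<forall>i\<in>{1,2,3}. \<forall>j\<in>{1,2,3}. i \<noteq> j \<longrightarrow> st (z i) * z j = c * (z j * st (z i))) \<and>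
       st z1 * z1 - z1 * st z1 = 0 \<and>
       st z2 * z2 - z2 * st z2 = \<iota> (complex_of_real (1 - q\<^sup>2)) * (z1 * st z1) \<and>
       st z3 * z3 - z3 * st z3 = \<iota> (complex_of_real (1 - q\<^sup>2)) * (z1 * st z1 + z2 * st z2) \<and>
       z1 * st z1 + z2 * st z2 + z3 * st z3 = 1)"

definition qnum :: "real \<Rightarrow> real \<Rightarrow> real" where
  "qnum q x = (q powr x - q powr (- x)) / (q - inverse q)"

definition qfact :: "real \<Rightarrow> nat \<Rightarrow> real" where
  "qfact q n = (\<Prod>i\<in>{1..n}. qnum q (real i))"

definition qtrinom :: "real \<Rightarrow> nat \<Rightarrow> nat \<Rightarrow> nat \<Rightarrow> real" where
  "qtrinom q j k l = q powr (- real (j*k + k*l + l*j)) *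
      (qfact q (j+k+l) / (qfact q j * qfact q k * qfact q l))"

end

theory Submission
  imports Defs
begin


lemma qnum_nat: "0 < q \<Longrightarrow> qnum q (real n) = (q^n - 1/q^n)/(q - 1/q)"
  by (simp add: qnum_def powr_realpow powr_minus divide_inverse)

lemma qnum0: "qnum q 0 = 0" by (simp add: qnum_def)

lemma qnum_nz: assumes "0<q" "q<1" "0<n" shows "qnum q (real n) \<noteq> 0"
proof -
  have a1: "q^n < 1" using assms by (simp add: power_less_one_iff)
  have a2: "1 < 1/q^n" using a1 assms by simp
  have b: "q < 1/q" using assms by (simp add: field_simps power2_eq_square[symmetric] power_less_one_iff)
  have "q^n - 1/q^n \<noteq> 0" using a1 a2 by linarith
  moreover have "q - 1/q \<noteq> 0" using b by linarith
  ultimately show ?thesis by (simp add: qnum_nat[OF assms(1)])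
qed

lemma qfact_Suc: "qfact q (Suc n) = qfact q n * qnum q (real (Suc n))"
  by (simp add: qfact_def prod.nat_ivl_Suc')

lemma qfact_nz: "0<q \<Longrightarrow> q<1 \<Longrightarrow> qfact q n \<noteq> 0"
proof (induction n)
  case 0 thus ?case by (simp add: qfact_def)
next
  case (Suc n) thus ?case using qnum_nz[of q "Suc n"] by (simp only: qfact_Suc mult_eq_0_iff) simp
qed

lemma qtrinom_alt: "0<q \<Longrightarrow> qtrinom q j k l = (qfact q (j+k+l) / (qfact q j * qfact q k * qfact q l)) / q^(j*k+k*l+l*j)"
proof -
  assume q: "0<q"
  have "q powr (- real (j*k+k*l+l*j)) = 1 / q^(j*k+k*l+l*j)"
    using q by (simp add: powr_minus powr_realpow divide_inverse del: of_nat_add of_nat_mult)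
  thus ?thesis unfolding qtrinom_def by simp
qed

lemma qtrinom_swap12: "qtrinom q j k l = qtrinom q k j l"
  unfolding qtrinom_def by (simp add: algebra_simps)
lemma qtrinom_swap13: "qtrinom q j k l = qtrinom q l k j"
  unfolding qtrinom_def by (simp add: algebra_simps)

lemma qtrinom000: "0<q \<Longrightarrow> qtrinom q 0 0 0 = 1"
  by (simp add: qtrinom_def qfact_def)

lemma pascal: assumes "0<q" "q<1"
  shows "qtrinom q (Suc j) k l * qnum q (real (Suc j)) * q^(k+l) = qnum q (real (Suc j+k+l)) * qtrinom q j k l"
proof -
  have e: "Suc j * k + k * l + l * Suc j = (j*k+k*l+l*j) + (k+l)" by (simp add: algebra_simps)
  have s: "Suc j + k + l = Suc (j+k+l)" by simp
  show ?thesis using qfact_nz[OF assms] qnum_nz[OF assms, of "Suc j"] qnum_nz[OF assms, of "Suc (j+k+l)"] assms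
    unfolding qtrinom_alt[OF assms(1)] e s qfact_Suc power_add
    by (simp add: field_simps)
qed

lemma pascal_if: assumes "0<q" "q<1"
  shows "(if 0<j then qtrinom q (j-1) k l * c else 0) * qnum q (real (j+k+l)) = c * q^(k+l) * qnum q (real j) * qtrinom q j k l"
proof (cases j)
  case 0 thus ?thesis by (simp add: qnum0)
next
  case (Suc j') thus ?thesis using pascal[OF assms, of j' k l] by (simp add: algebra_simps)
qed

lemma qnum3: assumes "0<q" shows "qnum q (real (j+k+l)) = qnum q (real j) / q^(k+l) + q^j * qnum q (real k) / q^l + q^(j+k) * qnum q (real l)"
proof -
  have "q^(j+k+l) - 1/q^(j+k+l) = (q^j - 1/q^j)/q^(k+l) + q^j*(q^k - 1/q^k)/q^l + q^(j+k)*(q^l-1/q^l)"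
    using assms by (simp add: field_simps power_add)
  note h = this
  define E where "E = 1/(q - 1/q)"
  have e: "\<And>n. qnum q (real n) = (q^n - 1/q^n) * E" unfolding E_def using qnum_nat[OF assms] by simp
  show ?thesis unfolding e h by (simp add: algebra_simps)
qed

lemma qnum3': assumes "0<q" shows "qnum q (real (j+k+l)) = qnum q (real j) * q^(k+l) + qnum q (real k) * q^l / q^j + qnum q (real l) / q^(j+k)"
proof -
  have "q^(j+k+l) - 1/q^(j+k+l) = (q^j - 1/q^j)*q^(k+l) + (q^k - 1/q^k)*q^l/q^j + (q^l-1/q^l)/q^(j+k)"
    using assms by (simp add: field_simps power_add)
  note h = this
  define E where "E = 1/(q - 1/q)"
  have e: "\<And>n. qnum q (real n) = (q^n - 1/q^n) * E" unfolding E_def using qnum_nat[OF assms] by simp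
  show ?thesis unfolding e h by (simp add: algebra_simps)
qed




locale s5 =
  fixes q :: real and \<iota> :: "complex \<Rightarrow> 'a::ring_1" and st :: "'a \<Rightarrow> 'a"
    and z1 z2 z3 :: 'a
  assumes q0: "0 < q" and q1: "q < 1"
    and csa: "complex_star_algebra \<iota> st"
    and rel: "S5q_relations q \<iota> st z1 z2 z3"
begin

definition r :: "real \<Rightarrow> 'a" where "r x = \<iota> (complex_of_real x)"

lemma csa_parts: "\<forall>a b. \<iota> (a + b) = \<iota> a + \<iota> b" "\<forall>a b. \<iota> (a * b) = \<iota> a * \<iota> b"
   "\<iota> 1 = 1" "\<forall>a x. \<iota> a * x = x * \<iota> a" "\<forall>x y. st (x + y) = st x + st y"
   "\<forall>x y. st (x * y) = st y * st x" "\<forall>x. st (st x) = x" "\<forall>a. st (\<iota> a) = \<iota> (cnj a)"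
  using csa unfolding complex_star_algebra_def by blast+

lemma r_add: "r (a + b) = r a + r b" using csa_parts(1) by (simp add: r_def)
lemma r_mult: "r (a * b) = r a * r b" using csa_parts(2) by (simp add: r_def)
lemma r_one: "r 1 = 1" using csa_parts(3) by (simp add: r_def)
lemma r_zero: "r 0 = 0" using r_add[of 0 0] by simp
lemma r_central: "r a * x = x * r a" using csa_parts(4) unfolding r_def by blast
lemma st_add: "st (x + y) = st x + st y" using csa_parts(5) by blast
lemma st_mult: "st (x * y) = st y * st x" using csa_parts(6) by blast
lemma st_st: "st (st x) = x" using csa_parts(7) by blast
lemma st_r: "st (r a) = r a" using csa_parts(8) by (simp add: r_def)
lemma st_one: "st 1 = 1" using st_r[of 1] r_one by simp
lemma st_zero: "st 0 = 0" using st_add[of 0 0] by simp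

lemma r_mult': "r a * (r b * x) = r (a*b) * x" by (simp only: r_mult mult.assoc)
lemma r_addl: "r a * x + r b * x = r (a+b) * x" by (simp only: r_add distrib_right)
lemma r_lc: "x * (r a * y) = r a * (x * y)"
proof -
  have "x * (r a * y) = (x * r a) * y" by (simp only: mult.assoc)
  also have "... = (r a * x) * y" by (simp only: r_central[of a x, symmetric])
  finally show ?thesis by (simp only: mult.assoc)
qed
lemma pc: "(x::'a)^n * (x * y) = x * (x^n * y)"
proof -
  have "x^n * (x * y) = (x^n * x) * y" by (simp only: mult.assoc)
  also have "... = (x * x^n) * y" by (simp only: power_commutes)
  finally show ?thesis by (simp only: mult.assoc)
qed
lemma r_sum: "r (sum f A) = sum (\<lambda>x. r (f x)) A"
  by (induction A rule: infinite_finite_induct) (simp_all add: r_zero r_add)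
lemma r_sum_l: "sum (\<lambda>x. r (f x) * X x) A + sum (\<lambda>x. r (g x) * X x) A = sum (\<lambda>x. r (f x + g x) * X x) A"
  by (simp only: sum.distrib[symmetric] r_addl)

lemmas rels = rel[unfolded S5q_relations_def Let_def, folded r_def]

lemma r12: "z1 * z2 = r q * (z2 * z1)" using rels by simp
lemma r13: "z1 * z3 = r q * (z3 * z1)" using rels by simp
lemma r23: "z2 * z3 = r q * (z3 * z2)" using rels by simp
lemma sum1: "z1 * st z1 + z2 * st z2 + z3 * st z3 = 1" using rels by simp
lemma c1: "st z1 * z1 = z1 * st z1" using rels by simp
lemma c2: "st z2 * z2 = z2 * st z2 + r (1 - q^2) * (z1 * st z1)" using rels by (simp add: algebra_simps)
lemma c3: "st z3 * z3 = z3 * st z3 + r (1 - q^2) * (z1 * st z1 + z2 * st z2)" using rels by (simp add: algebra_simps)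

lemma flip: assumes "x * y = r q * (y * x)" shows "y * x = r (1/q) * (x * y)"
proof -
  have "r (1/q) * (x * y) = r (1/q * q) * (y * x)" by (simp add: assms r_mult')
  thus ?thesis using q0 by (simp add: r_one)
qed

lemma comm_pow: assumes "y * x = r c * (x * y)" shows "y * x^n = r (c^n) * (x^n * y)"
proof (induction n)
  case 0 thus ?case by (simp add: r_one)
next
  case (Suc n)
  have "y * x ^ Suc n = (y * x^n) * x" by (simp add: mult.assoc power_commutes pc)
  also have "... = r (c^n) * (x^n * (y * x))" by (simp add: Suc mult.assoc)
  also have "... = r (c^n) * (x^n * (r c * (x * y)))" by (simp add: assms)
  also have "... = r (c^n * c) * (x ^ Suc n * y)" by (simp add: r_lc[of "x^n"] r_mult' mult.assoc power_commutes pc)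
  finally show ?case by (simp add: mult.commute)
qed

lemma comm_pow2: assumes "y * x = r c * (x * y)" shows "y^n * x = r (c^n) * (x * y^n)"
proof (induction n)
  case 0 thus ?case by (simp add: r_one)
next
  case (Suc n)
  have "y ^ Suc n * x = y * (y^n * x)" by (simp add: mult.assoc)
  also have "... = r (c^n) * ((y * x) * y^n)" by (simp add: Suc r_lc[of y] mult.assoc)
  also have "... = r (c^n) * ((r c * (x * y)) * y^n)" by (simp add: assms)
  also have "... = r (c^n * c) * (x * y ^ Suc n)" by (simp add: r_mult' mult.assoc)
  finally show ?case by (simp add: mult.commute)
qed

definition mon :: "nat \<Rightarrow> nat \<Rightarrow> nat \<Rightarrow> 'a" where "mon j k l = z1^j * z2^k * z3^l"

lemma f21: "z2 * z1 = r (1/q) * (z1 * z2)" by (rule flip[OF r12])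
lemma f31: "z3 * z1 = r (1/q) * (z1 * z3)" by (rule flip[OF r13])
lemma f32: "z3 * z2 = r (1/q) * (z2 * z3)" by (rule flip[OF r23])

lemma mon_z3: "mon j k l * z3 = mon j k (Suc l)"
  by (simp add: mon_def mult.assoc power_commutes pc)
lemma mon_z2: "mon j k l * z2 = r ((1/q)^l) * mon j (Suc k) l"
proof -
  have "mon j k l * z2 = z1^j * z2^k * (z3^l * z2)" by (simp add: mon_def mult.assoc)
  also have "... = r ((1/q)^l) * mon j (Suc k) l"
    by (simp add: comm_pow2[OF f32] r_lc[of "z1^j"] r_lc[of "z2^k"] mon_def mult.assoc power_commutes pc)
  finally show ?thesis .
qed
lemma mon_z1: "mon j k l * z1 = r ((1/q)^l * (1/q)^k) * mon (Suc j) k l"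
proof -
  have "mon j k l * z1 = z1^j * z2^k * (z3^l * z1)" by (simp add: mon_def mult.assoc)
  also have "... = r ((1/q)^l) * (z1^j * (z2^k * z1) * z3^l)"
    by (simp add: comm_pow2[OF f31] r_lc[of "z1^j"] r_lc[of "z2^k"] mult.assoc)
  also have "... = r ((1/q)^l * (1/q)^k) * mon (Suc j) k l"
    by (simp add: comm_pow2[OF f21] r_lc[of "z1^j"] r_mult' mon_def mult.assoc power_commutes pc)
  finally show ?thesis .
qed
lemma z1_mon: "z1 * mon j k l = mon (Suc j) k l"
  by (simp add: mon_def mult.assoc)
lemma z2_mon: "z2 * mon j k l = r ((1/q)^j) * mon j (Suc k) l"
proof -
  have "z2 * mon j k l = (z2 * z1^j) * z2^k * z3^l" by (simp add: mon_def mult.assoc)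
  also have "... = r ((1/q)^j) * mon j (Suc k) l"
    by (simp add: comm_pow[OF f21] mon_def mult.assoc)
  finally show ?thesis .
qed
lemma z3_mon: "z3 * mon j k l = r ((1/q)^j * (1/q)^k) * mon j k (Suc l)"
proof -
  have "z3 * mon j k l = (z3 * z1^j) * z2^k * z3^l" by (simp add: mon_def mult.assoc)
  also have "... = r ((1/q)^j) * (z1^j * (z3 * z2^k) * z3^l)"
    by (simp add: comm_pow[OF f31] mult.assoc)
  also have "... = r ((1/q)^j * (1/q)^k) * mon j k (Suc l)"
    by (simp add: comm_pow[OF f32] r_lc[of "z1^j"] r_mult' mon_def mult.assoc power_commutes pc)
  finally show ?thesis .
qed

lemma st_rm: "st (r s * x) = r s * st x" by (simp add: st_mult st_r r_central)

lemma E1: assumes "m * z = r s * m'" shows "m * z * st z * st m = r (s*s) * (m' * st m')"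
proof -
  have "m * z * st z * st m = (m * z) * st (m * z)" by (simp add: st_mult mult.assoc)
  also have "... = r (s*s) * (m' * st m')" by (simp add: assms st_rm r_lc[of m'] r_mult' mult.assoc)
  finally show ?thesis .
qed
lemma E2: assumes "z * m = r s * m'" shows "st m * st z * z * m = r (s*s) * (st m' * m')"
proof -
  have "st m * st z * z * m = st (z * m) * (z * m)" by (simp add: st_mult mult.assoc)
  also have "... = r (s*s) * (st m' * m')" by (simp add: assms st_rm r_lc[of "st m'"] r_mult' mult.assoc)
  finally show ?thesis .
qed

lemma W: "r (q^2) * (st z1 * z1) + st z2 * z2 + r (1/q^2) * (st z3 * z3) = r (1/q^2)"
proof -
  define a where "a = z1 * st z1"
  define b where "b = z2 * st z2"
  define c where "c = z3 * st z3"
  define s where "s = 1/q^2"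
  have sa: "q^2 + (1 - q^2) + s * (1 - q^2) = s" and sb: "1 + s * (1 - q^2) = s"
    using q0 by (simp_all add: s_def field_simps)
  have "r (q^2) * (st z1 * z1) + st z2 * z2 + r (1/q^2) * (st z3 * z3)
      = r (q^2) * a + (b + r (1 - q^2) * a) + r s * (c + r (1 - q^2) * (a + b))"
    by (simp add: a_def b_def c_def s_def c1 c2 c3)
  also have "... = (r (q^2) * a + r (1 - q^2) * a + r (s * (1 - q^2)) * a) + (r 1 * b + r (s * (1 - q^2)) * b) + r s * c"
    by (simp only: distrib_left r_mult' r_one mult_1_left add_ac)
  also have "... = r s * a + r s * b + r s * c"
    by (simp only: r_addl sa sb)
  also have "... = r s" by (simp add: a_def b_def c_def sum1 distrib_left[symmetric])
  finally show ?thesis by (simp add: s_def)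
qed

end



definition P :: "nat \<Rightarrow> (nat \<times> nat \<times> nat) set" where "P N = {(j,k,l). j+k+l = N}"

lemma finP: "finite (P N)"
proof -
  have "P N \<subseteq> {..N} \<times> {..N} \<times> {..N}" by (auto simp: P_def)
  thus ?thesis by (rule finite_subset) auto
qed

lemma P0: "P 0 = {(0,0,0)}" by (auto simp: P_def)

lemma shift_gen:
  assumes "\<And>p. p \<in> S \<Longrightarrow> h p \<in> T \<and> h' (h p) = p"
      and "\<And>p. p \<in> T \<Longrightarrow> Q p \<Longrightarrow> h' p \<in> S \<and> h (h' p) = p"
      and "\<And>p. p \<in> S \<Longrightarrow> Q (h p)" and "finite T"
  shows "(\<Sum>p\<in>S. g (h p)) = (\<Sum>p\<in>T. if Q p then g p else (0::'b::comm_monoid_add))"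
proof -
  have "(\<Sum>p\<in>T. if Q p then g p else 0) = (\<Sum>p\<in>{p\<in>T. Q p}. g p)"
    using assms(4) by (simp add: sum.inter_filter)
  also have "... = (\<Sum>p\<in>S. g (h p))"
    by (rule sum.reindex_bij_witness[where i=h and j=h']) (use assms in auto)
  finally show ?thesis by simp
qed

abbreviation "J p \<equiv> fst p"
abbreviation "K p \<equiv> fst (snd p)"
abbreviation "L p \<equiv> snd (snd p)"

lemma shift1: "(\<Sum>p\<in>P N. g (Suc (J p)) (K p) (L p)) = (\<Sum>p\<in>P (Suc N). if 0 < J p then g (J p) (K p) (L p) else (0::'b::comm_monoid_add))"
  by (rule shift_gen[where g="\<lambda>p. g (J p) (K p) (L p)" and Q="\<lambda>p. 0 < J p" and h="\<lambda>p. (Suc (J p), K p, L p)" and h'="\<lambda>p. (J p - 1, K p, L p)", simplified])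
     (auto simp: P_def finP[unfolded P_def])
lemma shift2: "(\<Sum>p\<in>P N. g (J p) (Suc (K p)) (L p)) = (\<Sum>p\<in>P (Suc N). if 0 < K p then g (J p) (K p) (L p) else (0::'b::comm_monoid_add))"
  by (rule shift_gen[where g="\<lambda>p. g (J p) (K p) (L p)" and Q="\<lambda>p. 0 < K p" and h="\<lambda>p. (J p, Suc (K p), L p)" and h'="\<lambda>p. (J p, K p - 1, L p)", simplified])
     (auto simp: P_def finP[unfolded P_def])
lemma shift3: "(\<Sum>p\<in>P N. g (J p) (K p) (Suc (L p))) = (\<Sum>p\<in>P (Suc N). if 0 < L p then g (J p) (K p) (L p) else (0::'b::comm_monoid_add))"
  by (rule shift_gen[where g="\<lambda>p. g (J p) (K p) (L p)" and Q="\<lambda>p. 0 < L p" and h="\<lambda>p. (J p, K p, Suc (L p))" and h'="\<lambda>p. (J p, K p, L p - 1)", simplified])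
     (auto simp: P_def finP[unfolded P_def])




lemma coef_gen: assumes q: "0<q" "q<1"
  shows "((if 0<j then qtrinom q (j-1) k l * a else 0) + (if 0<k then qtrinom q j (k-1) l * b else 0) + (if 0<l then qtrinom q j k (l-1) * c else 0)) * qnum q (real (j+k+l))
     = qtrinom q j k l * (a*q^(k+l)*qnum q (real j) + b*q^(j+l)*qnum q (real k) + c*q^(j+k)*qnum q (real l))"
proof -
  have A: "(if 0<j then qtrinom q (j-1) k l * a else 0) * qnum q (real (j+k+l)) = a*q^(k+l)*qnum q (real j)*qtrinom q j k l"
    by (rule pascal_if[OF q])
  have "(if 0<k then qtrinom q j (k-1) l * b else 0) = (if 0<k then qtrinom q (k-1) j l * b else 0)"
    by (simp add: qtrinom_swap12[of q j])
  moreover have "(if 0<k then qtrinom q (k-1) j l * b else 0) * qnum q (real (k+j+l)) = b*q^(j+l)*qnum q (real k)*qtrinom q k j l"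
    by (rule pascal_if[OF q])
  ultimately have B: "(if 0<k then qtrinom q j (k-1) l * b else 0) * qnum q (real (j+k+l)) = b*q^(j+l)*qnum q (real k)*qtrinom q j k l"
    by (simp add: qtrinom_swap12[of q k] add.commute add.left_commute)
  have "(if 0<l then qtrinom q j k (l-1) * c else 0) = (if 0<l then qtrinom q (l-1) k j * c else 0)"
    by (simp add: qtrinom_swap13[of q j])
  moreover have "(if 0<l then qtrinom q (l-1) k j * c else 0) * qnum q (real (l+k+j)) = c*q^(k+j)*qnum q (real l)*qtrinom q l k j"
    by (rule pascal_if[OF q])
  ultimately have C: "(if 0<l then qtrinom q j k (l-1) * c else 0) * qnum q (real (j+k+l)) = c*q^(j+k)*qnum q (real l)*qtrinom q j k l"
    by (simp add: qtrinom_swap13[of q l] add.commute add.left_commute)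
  show ?thesis unfolding distrib_right A B C by (simp add: algebra_simps)
qed

lemma coef1: assumes q: "0<q" "q<1" and n: "j+k+l = Suc N"
  shows "(if 0<j then qtrinom q (j-1) k l * ((1/q)^l*(1/q)^k*((1/q)^l*(1/q)^k)) else 0) + (if 0<k then qtrinom q j (k-1) l * ((1/q)^l*(1/q)^l) else 0) + (if 0<l then qtrinom q j k (l-1) * (1*1) else 0) = qtrinom q j k l"
   (is "?X = _")
proof -
  have e1: "(1/q)^l*(1/q)^k*((1/q)^l*(1/q)^k) * q^(k+l) = 1/q^(k+l)" using q by (simp add: field_simps power_add)
  have e2: "(1/q)^l*(1/q)^l * q^(j+l) = q^j/q^l" using q by (simp add: field_simps power_add)
  have br: "(1/q)^l*(1/q)^k*((1/q)^l*(1/q)^k)*q^(k+l)*qnum q (real j) + (1/q)^l*(1/q)^l*q^(j+l)*qnum q (real k) + 1*1*q^(j+k)*qnum q (real l)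
      = qnum q (real (j+k+l))"
    unfolding qnum3[OF q(1), of j k l] e1 e2 by simp
  have "?X * qnum q (real (j+k+l)) = qtrinom q j k l * qnum q (real (j+k+l))"
    unfolding coef_gen[OF q] br by (rule refl)
  moreover have "qnum q (real (j+k+l)) \<noteq> 0" using qnum_nz[OF q, of "j+k+l"] n by simp
  ultimately show ?thesis by simp
qed

lemma gpow: "0<q \<Longrightarrow> q powr (2*(real a - real b)) = q^a*q^a/(q^b*q^b)"
proof -
  assume q: "0<q"
  have "q powr (2*(real a - real b)) = q powr (real a) * q powr (real a) / (q powr (real b) * q powr (real b))"
    by (simp add: powr_diff powr_add[symmetric] algebra_simps)
  thus ?thesis using q by (simp add: powr_realpow)
qed

lemma cancel_aux: "(X::real) * n = F * (c * n) \<Longrightarrow> n \<noteq> 0 \<Longrightarrow> X = c * F"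
  by (metis mult.commute mult.left_commute mult_cancel_right)

lemma coef2: assumes q: "0<q" "q<1" and n: "j+k+l = Suc N"
  shows "(if 0<j then q powr (2*(real (j-1) - real l)) * qtrinom q (j-1) k l * (q^2*(1*1)) else 0)
       + (if 0<k then q powr (2*(real j - real l)) * qtrinom q j (k-1) l * ((1/q)^j*(1/q)^j) else 0)
       + (if 0<l then q powr (2*(real j - real (l-1))) * qtrinom q j k (l-1) * (1/q^2 * ((1/q)^j*(1/q)^k*((1/q)^j*(1/q)^k))) else 0)
       = q powr (2*(real j - real l)) * qtrinom q j k l"
   (is "?X = _")
proof -
  define a where "a = q^j*q^j/(q^l*q^l)"
  define b where "b = 1/(q^l*q^l)"
  define c where "c = 1/(q^l*q^l*q^k*q^k)"
  have h1: "(if 0<j then q powr (2*(real (j-1) - real l)) * qtrinom q (j-1) k l * (q^2*(1*1)) else 0)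
      = (if 0<j then qtrinom q (j-1) k l * a else 0)"
  proof (cases j)
    case (Suc j') thus ?thesis using q by (simp only: Suc diff_Suc_1 gpow[OF q(1)]) (simp add: Suc a_def field_simps power2_eq_square)
  qed simp
  have h2: "(if 0<k then q powr (2*(real j - real l)) * qtrinom q j (k-1) l * ((1/q)^j*(1/q)^j) else 0)
      = (if 0<k then qtrinom q j (k-1) l * b else 0)"
    using q by (simp only: gpow[OF q(1)]) (simp add: b_def field_simps)
  have h3: "(if 0<l then q powr (2*(real j - real (l-1))) * qtrinom q j k (l-1) * (1/q^2 * ((1/q)^j*(1/q)^k*((1/q)^j*(1/q)^k))) else 0)
      = (if 0<l then qtrinom q j k (l-1) * c else 0)"
  proof (cases l)
    case (Suc l') thus ?thesis using q by (simp only: Suc diff_Suc_1 gpow[OF q(1)]) (simp add: Suc c_def field_simps power2_eq_square)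
  qed simp
  have e: "a*q^(k+l)*qnum q (real j) + b*q^(j+l)*qnum q (real k) + c*q^(j+k)*qnum q (real l)
       = q^j*q^j/(q^l*q^l) * (qnum q (real j) * q^(k+l) + qnum q (real k) * q^l / q^j + qnum q (real l) / q^(j+k))"
    using q by (simp add: a_def b_def c_def field_simps power_add)
  have "?X * qnum q (real (j+k+l)) = ((if 0<j then qtrinom q (j-1) k l * a else 0) + (if 0<k then qtrinom q j (k-1) l * b else 0) + (if 0<l then qtrinom q j k (l-1) * c else 0)) * qnum q (real (j+k+l))"
    by (simp only: h1 h2 h3)
  also have "... = qtrinom q j k l * (a*q^(k+l)*qnum q (real j) + b*q^(j+l)*qnum q (real k) + c*q^(j+k)*qnum q (real l))"
    by (rule coef_gen[OF q])
  also have "... = qtrinom q j k l * (q^j*q^j/(q^l*q^l) * qnum q (real (j+k+l)))"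
    by (simp only: e qnum3'[OF q(1), of j k l])
  finally have "?X * qnum q (real (j+k+l)) = qtrinom q j k l * (q^j*q^j/(q^l*q^l) * qnum q (real (j+k+l)))" .
  moreover have "qnum q (real (j+k+l)) \<noteq> 0" using qnum_nz[OF q, of "j+k+l"] n by simp
  ultimately have "?X = q^j*q^j/(q^l*q^l) * qtrinom q j k l"
    using cancel_aux by blast
  thus ?thesis by (simp only: gpow[OF q(1)])
qed




lemma tri_sum: "(\<Sum>(j,k,l)\<in>A. f j k l) = (\<Sum>p\<in>A. f (J p) (K p) (L p))"
  by (rule sum.cong) (auto split: prod.splits)

context s5 begin

definition E1 :: "nat \<Rightarrow> nat \<Rightarrow> nat \<Rightarrow> 'a" where "E1 j k l = mon j k l * st (mon j k l)"
definition E2 :: "nat \<Rightarrow> nat \<Rightarrow> nat \<Rightarrow> 'a" where "E2 j k l = st (mon j k l) * mon j k l"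

lemma comb: "(if b1 then r x1 * E else 0) + (if b2 then r x2 * E else 0) + (if b3 then r x3 * E else 0)
   = r ((if b1 then x1 else 0) + (if b2 then x2 else 0) + (if b3 then x3 else 0)) * E"
  by (simp add: r_add r_zero distrib_right)

lemma mon_z3': "mon j k l * z3 = r 1 * mon j k (Suc l)" by (simp add: mon_z3 r_one)
lemma z1_mon': "z1 * mon j k l = r 1 * mon (Suc j) k l" by (simp add: z1_mon r_one)

lemma pt1: "r F * E1 j k l = r (F * ((1/q)^l*(1/q)^k*((1/q)^l*(1/q)^k))) * E1 (Suc j) k l
     + r (F * ((1/q)^l*(1/q)^l)) * E1 j (Suc k) l + r (F * (1*1)) * E1 j k (Suc l)"
proof -
  define m where "m = mon j k l"
  have "E1 j k l = m * (z1 * st z1 + z2 * st z2 + z3 * st z3) * st m"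
    by (simp add: sum1 E1_def m_def)
  also have "... = m * z1 * st z1 * st m + m * z2 * st z2 * st m + m * z3 * st z3 * st m"
    by (simp add: distrib_left distrib_right mult.assoc)
  also have "... = r ((1/q)^l*(1/q)^k*((1/q)^l*(1/q)^k)) * E1 (Suc j) k l
     + r ((1/q)^l*(1/q)^l) * E1 j (Suc k) l + r (1*1) * E1 j k (Suc l)"
    unfolding m_def E1[OF mon_z1] E1[OF mon_z2] E1[OF mon_z3'] E1_def by (rule refl)
  finally show ?thesis by (simp add: distrib_left r_mult')
qed

lemma pt2: "r (1/q^2) * (r G * E2 j k l) = r (G * (q^2*(1*1))) * E2 (Suc j) k l
     + r (G * ((1/q)^j*(1/q)^j)) * E2 j (Suc k) l + r (G * (1/q^2 * ((1/q)^j*(1/q)^k*((1/q)^j*(1/q)^k)))) * E2 j k (Suc l)"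
proof -
  define m where "m = mon j k l"
  have sm: "st m * r (1/q^2) * m = r (1/q^2) * (st m * m)" by (simp only: mult.assoc r_lc[of "st m"])
  have "r (1/q^2) * (r G * E2 j k l) = r G * (st m * r (1/q^2) * m)"
    by (simp only: sm r_mult' E2_def[of j k l, folded m_def] mult.commute[of G])
  also have "... = r G * (st m * (r (q^2) * (st z1 * z1) + st z2 * z2 + r (1/q^2) * (st z3 * z3)) * m)"
    by (simp only: W)
  also have "... = r G * (r (q^2) * (st m * st z1 * z1 * m) + st m * st z2 * z2 * m + r (1/q^2) * (st m * st z3 * z3 * m))"
    by (simp add: distrib_left distrib_right mult.assoc r_lc[of "st m"])
  also have "... = r G * (r (q^2) * (r (1*1) * E2 (Suc j) k l) + r ((1/q)^j*(1/q)^j) * E2 j (Suc k) l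
       + r (1/q^2) * (r ((1/q)^j*(1/q)^k*((1/q)^j*(1/q)^k)) * E2 j k (Suc l)))"
    unfolding m_def E2[OF z1_mon'] E2[OF z2_mon] E2[OF z3_mon] E2_def by (rule refl)
  finally show ?thesis by (simp add: distrib_left r_mult' mult.assoc)
qed

definition S1 :: "nat \<Rightarrow> 'a" where
  "S1 N = (\<Sum>p\<in>P N. r (qtrinom q (J p) (K p) (L p)) * E1 (J p) (K p) (L p))"
definition T1 :: "nat \<Rightarrow> 'a" where
  "T1 N = (\<Sum>p\<in>P N. r (q powr (2 * (real (J p) - real (L p))) * qtrinom q (J p) (K p) (L p)) * E2 (J p) (K p) (L p))"

lemma S1_step: "S1 N = S1 (Suc N)"
proof -
  define F where "F = qtrinom q"
  define a where "a = (\<lambda>k l. (1/q)^l*(1/q)^k*((1/q)^l*(1/q)^k::real))"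
  define b where "b = (\<lambda>l. (1/q)^l*(1/q)^l::real)"
  have "S1 N = (\<Sum>p\<in>P N. r (F (J p) (K p) (L p) * a (K p) (L p)) * E1 (Suc (J p)) (K p) (L p))
      + (\<Sum>p\<in>P N. r (F (J p) (K p) (L p) * b (L p)) * E1 (J p) (Suc (K p)) (L p))
      + (\<Sum>p\<in>P N. r (F (J p) (K p) (L p) * (1*1)) * E1 (J p) (K p) (Suc (L p)))"
    unfolding S1_def sum.distrib[symmetric] F_def a_def b_def by (rule sum.cong[OF refl], rule pt1)
  also have "... = (\<Sum>p\<in>P (Suc N). if 0 < J p then r (F (J p - 1) (K p) (L p) * a (K p) (L p)) * E1 (J p) (K p) (L p) else 0)
      + (\<Sum>p\<in>P (Suc N). if 0 < K p then r (F (J p) (K p - 1) (L p) * b (L p)) * E1 (J p) (K p) (L p) else 0)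
      + (\<Sum>p\<in>P (Suc N). if 0 < L p then r (F (J p) (K p) (L p - 1) * (1*1)) * E1 (J p) (K p) (L p) else 0)"
    using shift1[of "\<lambda>j k l. r (F (j - 1) k l * a k l) * E1 j k l" N]
      shift2[of "\<lambda>j k l. r (F j (k - 1) l * b l) * E1 j k l" N]
      shift3[of "\<lambda>j k l. r (F j k (l - 1) * (1*1)) * E1 j k l" N]
    by (simp only: diff_Suc_1)
  also have "... = (\<Sum>p\<in>P (Suc N). r (F (J p) (K p) (L p)) * E1 (J p) (K p) (L p))"
    unfolding sum.distrib[symmetric] comb
  proof (rule sum.cong[OF refl])
    fix p assume "p \<in> P (Suc N)"
    hence n: "J p + K p + L p = Suc N" by (auto simp: P_def split: prod.splits)
    show "r ((if 0 < J p then F (J p - 1) (K p) (L p) * a (K p) (L p) else 0) +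
          (if 0 < K p then F (J p) (K p - 1) (L p) * b (L p) else 0) +
          (if 0 < L p then F (J p) (K p) (L p - 1) * (1 * 1) else 0)) * E1 (J p) (K p) (L p)
         = r (F (J p) (K p) (L p)) * E1 (J p) (K p) (L p)"
      unfolding a_def b_def F_def coef1[OF q0 q1 n] by (rule refl)
  qed
  also have "... = S1 (Suc N)" by (simp add: S1_def F_def)
  finally show ?thesis .
qed

lemma S1_eq: "S1 N = 1"
proof (induction N)
  case 0 show ?case by (simp add: S1_def P0 qtrinom000[OF q0] r_one E1_def mon_def st_one)
next
  case (Suc N) thus ?case using S1_step[of N] by simp
qed

lemma T1_step: "r (1/q^2) * T1 N = T1 (Suc N)"
proof -
  define G where "G = (\<lambda>j k l. q powr (2 * (real j - real l)) * qtrinom q j k l)"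
  define a where "a = (q^2*(1*1::real))"
  define b where "b = (\<lambda>j. (1/q)^j*(1/q)^j::real)"
  define c where "c = (\<lambda>j k. 1/q^2 * ((1/q)^j*(1/q)^k*((1/q)^j*(1/q)^k))::real)"
  have "r (1/q^2) * T1 N = (\<Sum>p\<in>P N. r (G (J p) (K p) (L p) * a) * E2 (Suc (J p)) (K p) (L p))
      + (\<Sum>p\<in>P N. r (G (J p) (K p) (L p) * b (J p)) * E2 (J p) (Suc (K p)) (L p))
      + (\<Sum>p\<in>P N. r (G (J p) (K p) (L p) * c (J p) (K p)) * E2 (J p) (K p) (Suc (L p)))"
    unfolding T1_def sum_distrib_left sum.distrib[symmetric] G_def a_def b_def c_def by (rule sum.cong[OF refl], rule pt2)
  also have "... = (\<Sum>p\<in>P (Suc N). if 0 < J p then r (G (J p - 1) (K p) (L p) * a) * E2 (J p) (K p) (L p) else 0)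
      + (\<Sum>p\<in>P (Suc N). if 0 < K p then r (G (J p) (K p - 1) (L p) * b (J p)) * E2 (J p) (K p) (L p) else 0)
      + (\<Sum>p\<in>P (Suc N). if 0 < L p then r (G (J p) (K p) (L p - 1) * c (J p) (K p)) * E2 (J p) (K p) (L p) else 0)"
    using shift1[of "\<lambda>j k l. r (G (j - 1) k l * a) * E2 j k l" N]
      shift2[of "\<lambda>j k l. r (G j (k - 1) l * b j) * E2 j k l" N]
      shift3[of "\<lambda>j k l. r (G j k (l - 1) * c j k) * E2 j k l" N]
    by (simp only: diff_Suc_1)
  also have "... = (\<Sum>p\<in>P (Suc N). r (G (J p) (K p) (L p)) * E2 (J p) (K p) (L p))"
    unfolding sum.distrib[symmetric] comb
  proof (rule sum.cong[OF refl])
    fix p assume "p \<in> P (Suc N)"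
    hence n: "J p + K p + L p = Suc N" by (auto simp: P_def split: prod.splits)
    show "r ((if 0 < J p then G (J p - 1) (K p) (L p) * a else 0) +
          (if 0 < K p then G (J p) (K p - 1) (L p) * b (J p) else 0) +
          (if 0 < L p then G (J p) (K p) (L p - 1) * c (J p) (K p) else 0)) * E2 (J p) (K p) (L p)
         = r (G (J p) (K p) (L p)) * E2 (J p) (K p) (L p)"
      unfolding a_def b_def c_def G_def coef2[OF q0 q1 n] by (rule refl)
  qed
  also have "... = T1 (Suc N)" by (simp add: T1_def G_def)
  finally show ?thesis .
qed

lemma T1_eq: "T1 N = r (q powr (- 2 * real N))"
proof (induction N)
  case 0 show ?case using q0 by (simp add: T1_def P0 qtrinom000[OF q0] r_one E2_def mon_def st_one)
next
  case (Suc N)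
  have "T1 (Suc N) = r (1/q^2) * r (q powr (- 2 * real N))" by (simp only: T1_step[symmetric] Suc)
  also have "... = r (q powr (- 2 * real (Suc N)))"
  proof -
    have "1/q^2 * q powr (- 2 * real N) = q powr (- 2 * real (Suc N))"
    proof -
      have e: "- 2 * real (Suc N) = - 2 * real N + (- 2)" by simp
      have "q powr (-2) = 1/q^2" using q0 by (simp add: powr_minus powr_numeral divide_inverse)
      thus ?thesis unfolding e powr_add by simp
    qed
    thus ?thesis by (simp add: r_mult[symmetric])
  qed
  finally show ?case .
qed

end

theorem mainTheorem1:
  fixes q :: real and \<iota> :: "complex \<Rightarrow> 'a::ring_1" and st :: "'a \<Rightarrow> 'a"
    and z1 z2 z3 :: 'a and N :: nat
  assumes "0 < q" and "q < 1"
    and "complex_star_algebra \<iota> st"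
    and "S5q_relations q \<iota> st z1 z2 z3"
  shows "(\<Sum>(j,k,l)\<in>{(j,k,l). j + k + l = N}.
            \<iota> (complex_of_real (qtrinom q j k l)) *
            ((z1^j * z2^k * z3^l) * st (z1^j * z2^k * z3^l))) = 1 \<and>
         (\<Sum>(j,k,l)\<in>{(j,k,l). j + k + l = N}.
            \<iota> (complex_of_real (q powr (2 * (real j - real l)) * qtrinom q j k l)) *
            (st (z1^j * z2^k * z3^l) * (z1^j * z2^k * z3^l)))
         = \<iota> (complex_of_real (q powr (- 2 * real N)))"
proof -
  interpret s5 q \<iota> st z1 z2 z3 using assms by unfold_locales
  have 1: "(\<Sum>(j,k,l)\<in>{(j,k,l). j + k + l = N}.
            \<iota> (complex_of_real (qtrinom q j k l)) *
            ((z1^j * z2^k * z3^l) * st (z1^j * z2^k * z3^l))) = S1 N"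
    unfolding S1_def P_def E1_def mon_def r_def by (rule sum.cong[OF refl]) (auto split: prod.splits)
  have 2: "(\<Sum>(j,k,l)\<in>{(j,k,l). j + k + l = N}.
            \<iota> (complex_of_real (q powr (2 * (real j - real l)) * qtrinom q j k l)) *
            (st (z1^j * z2^k * z3^l) * (z1^j * z2^k * z3^l))) = T1 N"
    unfolding T1_def P_def E2_def mon_def r_def by (rule sum.cong[OF refl]) (auto split: prod.splits)
  show ?thesis unfolding 1 2 S1_eq T1_eq r_def by simp
qed

end
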